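(* Let $\alpha\geq 0$ and set $$f_{\alpha}(x)=\begin{cases} 0 & x<\sigma_0\\ \frac{2}{\alpha}(x-\sigma_0) & \sigma_0\leq x < (1+\frac{\alpha}{2})\sigma_0\\ (1+\frac{\alpha}{2})^{-1}x & (1+\frac{\alpha}{2})\sigma_0\leq x. \end{cases}$$ Then $\mathfrak{S}_{f_{\alpha}}(F)$ solves $$\operatorname{arg\,min}_X \mathscr{N}_F^{**}(X)+\frac{\alpha}{2} \|X\|_2^2,$$ where $\mathscr{N}_F^{**}(X)= \sum_j\left( \sigma_0^2-\left(\max\left(\sigma_0-\sigma_j(X),0\right)\right)^2\right) + \|X-F\|_2^2$.
   Context: $X,F$ are $M\times N$ matrices, $\|\cdot\|_2$ is the Frobenius norm, $\sigma_j(X)$ are the singular values of $X$, and $\sigma_0>0$ is a parameter. $\mathscr{N}_F^{**}$ is the convex envelope of $\mathscr{N}_F(X)=\sigma_0^2\operatorname{rank}(X)+\|X-F\|_2^2$. If $F=U\Sigma_\phi V^*$ is a singular value decomposition with singular values $\phi=(\phi_j)$, then for $f:[0,\infty)\to\mathbb{C}$, $\mathfrak{S}_f(F)=U\Sigma_{f(\phi)}V^*$, i.e. the singular values $\phi_j$ are replaced by $f(\phi_j)$. *)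

theory Defs
  imports "Jordan_Normal_Form.Schur_Decomposition" "HOL-Computational_Algebra.Polynomial"
begin

definition frob_sq :: "complex mat \<Rightarrow> real" where
  "frob_sq X = (\<Sum>i<dim_row X. \<Sum>j<dim_col X. (cmod (X $$ (i,j)))\<^sup>2)"

definition singular_values :: "complex mat \<Rightarrow> real multiset" where
  "singular_values X =
     image_mset (\<lambda>z. sqrt (Re z))
       (proots (char_poly (if dim_col X \<le> dim_row X then mat_adjoint X * X
                           else X * mat_adjoint X)))"

definition N_F_star :: "real \<Rightarrow> complex mat \<Rightarrow> complex mat \<Rightarrow> real" where
  "N_F_star s0 F X =
     (\<Sum>s\<in>#singular_values X. s0\<^sup>2 - (max (s0 - s) 0)\<^sup>2) + frob_sq (X - F)"

definition unitary_mat :: "nat \<Rightarrow> complex mat \<Rightarrow> bool" where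
  "unitary_mat n U \<longleftrightarrow> U \<in> carrier_mat n n \<and> mat_adjoint U * U = 1\<^sub>m n"

definition diag_rect :: "nat \<Rightarrow> nat \<Rightarrow> (nat \<Rightarrow> complex) \<Rightarrow> complex mat" where
  "diag_rect M N d = mat M N (\<lambda>(i,j). if i = j then d i else 0)"

definition is_svd :: "nat \<Rightarrow> nat \<Rightarrow> complex mat \<Rightarrow> complex mat \<Rightarrow> (nat \<Rightarrow> real) \<Rightarrow> complex mat \<Rightarrow> bool" where
  "is_svd M N F U \<phi> V \<longleftrightarrow> F \<in> carrier_mat M N \<and> unitary_mat M U \<and> unitary_mat N V \<and>
     (\<forall>j < min M N. \<phi> j \<ge> 0) \<and>
     F = U * diag_rect M N (\<lambda>j. complex_of_real (\<phi> j)) * mat_adjoint V"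

definition S_fun :: "nat \<Rightarrow> nat \<Rightarrow> (real \<Rightarrow> complex) \<Rightarrow> complex mat \<Rightarrow> (nat \<Rightarrow> real) \<Rightarrow> complex mat \<Rightarrow> complex mat" where
  "S_fun M N f U \<phi> V = U * diag_rect M N (\<lambda>j. f (\<phi> j)) * mat_adjoint V"

definition f_alpha :: "real \<Rightarrow> real \<Rightarrow> real \<Rightarrow> real" where
  "f_alpha s0 \<alpha> x =
     (if x < s0 then 0
      else if x < (1 + \<alpha>/2) * s0 then (2/\<alpha>) * (x - s0)
      else x / (1 + \<alpha>/2))"

end

theory Submission
  imports Defs
begin


lemma adj_dims[simp]: "dim_row (mat_adjoint A) = dim_col A" "dim_col (mat_adjoint A) = dim_row A"
  unfolding mat_adjoint_def by (auto simp: cols_def)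

lemma adj_index[simp]: "i < dim_col A \<Longrightarrow> j < dim_row A \<Longrightarrow> mat_adjoint (A :: complex mat) $$ (i,j) = cnj (A $$ (j,i))"
  unfolding mat_adjoint_def by (auto simp: cols_def mat_of_rows_index)

lemma adj_carrier[simp]: "mat_adjoint A \<in> carrier_mat n m \<longleftrightarrow> A \<in> carrier_mat m n"
  unfolding carrier_mat_def by auto

lemma adj_adj[simp]: "mat_adjoint (mat_adjoint (A :: complex mat)) = A"
  by (rule eq_matI, auto)

lemma mult_index: "i < dim_row A \<Longrightarrow> j < dim_col B \<Longrightarrow> dim_col A = dim_row B \<Longrightarrow>
   (A * B) $$ (i,j) = (\<Sum>k<dim_row B. A $$ (i,k) * B $$ (k,j))"
  by (simp add: index_mult_mat scalar_prod_def atLeast0LessThan)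

lemma adj_mult: assumes "(A :: complex mat) \<in> carrier_mat m n" "B \<in> carrier_mat n k"
  shows "mat_adjoint (A * B) = mat_adjoint B * mat_adjoint A"
  using assms by (intro eq_matI) (auto simp del: index_mult_mat(1) simp: mult_index mult.commute cnj_sum)

lemma adj_one[simp]: "mat_adjoint (1\<^sub>m n :: complex mat) = 1\<^sub>m n"
  by (rule eq_matI, auto)

lemma adj_zero[simp]: "mat_adjoint (0\<^sub>m n m :: complex mat) = 0\<^sub>m m n"
  by (rule eq_matI, auto)

lemma adj_minus: assumes "(A :: complex mat) \<in> carrier_mat m n" "B \<in> carrier_mat m n"
  shows "mat_adjoint (A - B) = mat_adjoint A - mat_adjoint B"
  using assms by (intro eq_matI) auto

lemma adj_four_block: assumes "P \<in> carrier_mat k k"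
  shows "mat_adjoint (four_block_mat (1\<^sub>m 1) (0\<^sub>m 1 k) (0\<^sub>m k 1) (P :: complex mat))
       = four_block_mat (1\<^sub>m 1) (0\<^sub>m 1 k) (0\<^sub>m k 1) (mat_adjoint P)"
  using assms by (intro eq_matI) (auto simp: index_mat_four_block)



section \<open>Unitary Schur decomposition\<close>

definition nv :: "complex vec \<Rightarrow> complex vec" where
  "nv w = complex_of_real (1 / sqrt (Re (w \<bullet>c w))) \<cdot>\<^sub>v w"

lemma nv_carrier[simp]: "w \<in> carrier_vec n \<Longrightarrow> nv w \<in> carrier_vec n"
  unfolding nv_def by auto

lemma sprod_smult_real: assumes "w \<in> carrier_vec n" "u \<in> carrier_vec n"
  shows "(complex_of_real c \<cdot>\<^sub>v w) \<bullet>c (complex_of_real d \<cdot>\<^sub>v u) = complex_of_real (c*d) * (w \<bullet>c u)"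
  using assms by (simp add: scalar_prod_def sum_distrib_left algebra_simps)

lemma sq_real: fixes w :: "complex vec" shows "w \<bullet>c w = complex_of_real (Re (w \<bullet>c w))" "Re (w \<bullet>c w) \<ge> 0"
proof -
  have "w \<bullet>c w \<ge> 0" by auto
  thus "w \<bullet>c w = complex_of_real (Re (w \<bullet>c w))" "Re (w \<bullet>c w) \<ge> 0"
    by (auto simp: less_eq_complex_def complex_eq_iff)
qed

lemma nv_sprod: assumes "w \<in> carrier_vec n" "u \<in> carrier_vec n"
  shows "nv w \<bullet>c nv u = complex_of_real (1 / sqrt (Re (w \<bullet>c w)) * (1 / sqrt (Re (u \<bullet>c u)))) * (w \<bullet>c u)"
  unfolding nv_def by (rule sprod_smult_real[OF assms])

lemma nv_self: assumes "w \<in> carrier_vec n" "w \<bullet>c w \<noteq> 0"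
  shows "nv w \<bullet>c nv w = 1"
proof -
  let ?r = "Re (w \<bullet>c w)"
  have r: "w \<bullet>c w = complex_of_real ?r" "?r \<ge> 0" using sq_real by auto
  with assms have r0: "?r > 0" by (metis less_eq_real_def of_real_0)
  have "nv w \<bullet>c nv w = complex_of_real (1 / sqrt ?r * (1 / sqrt ?r) * ?r)"
    unfolding nv_sprod[OF assms(1) assms(1)] by (subst r(1), simp)
  also have "1 / sqrt ?r * (1 / sqrt ?r) * ?r = 1" using r0
    by (simp add: field_simps)
  finally show ?thesis by simp
qed

lemma nv_corthogonal: assumes "corthogonal ws" "set ws \<subseteq> carrier_vec n"
  shows "corthogonal (map nv ws)"
proof (rule corthogonalI)
  fix i j assume i: "i < length (map nv ws)" and j: "j < length (map nv ws)"
  hence i': "i < length ws" and j': "j < length ws" by auto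
  have c: "ws ! i \<in> carrier_vec n" "ws ! j \<in> carrier_vec n" using assms(2) i' j' by auto
  have ii: "ws ! i \<bullet>c ws ! i \<noteq> 0" "ws ! j \<bullet>c ws ! j \<noteq> 0"
    using corthogonalD[OF assms(1) i' i'] corthogonalD[OF assms(1) j' j'] by auto
  have pos: "Re (ws ! i \<bullet>c ws ! i) > 0" "Re (ws ! j \<bullet>c ws ! j) > 0"
    using sq_real[of "ws!i"] sq_real[of "ws!j"] ii by (metis less_eq_real_def of_real_0)+
  show "(map nv ws ! i \<bullet>c map nv ws ! j = 0) = (i \<noteq> j)"
    using corthogonalD[OF assms(1) i' j'] pos
    by (simp add: i' j' nv_sprod[OF c])
qed

lemma nv_corthogonal_inv: assumes "corthogonal ws" "set ws \<subseteq> carrier_vec n" "length ws = n"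
  shows "corthogonal_inv (mat_of_cols n (map nv ws)) = mat_adjoint (mat_of_cols n (map nv ws))"
proof -
  have c: "set (map nv ws) \<subseteq> carrier_vec n" using assms by auto
  have eq: "map (\<lambda>w. vec_inv (nv w)) ws = map (\<lambda>w. conjugate (nv w)) ws"
  proof (rule map_cong[OF refl])
    fix w assume "w \<in> set ws"
    then obtain i where i: "i < length ws" and w: "w = ws ! i" by (auto simp: in_set_conv_nth)
    have ci: "ws ! i \<in> carrier_vec n" using assms i by auto
    have "ws ! i \<bullet>c ws ! i \<noteq> 0" using corthogonalD[OF assms(1) i i] by auto
    from nv_self[OF ci this] show "vec_inv (nv w) = conjugate (nv w)" unfolding w vec_inv_def by simp
  qed
  thus ?thesis unfolding corthogonal_inv_def mat_adjoint_def using c assms(3)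
    by (simp add: cols_mat_of_cols o_def cong: map_cong)
qed

theorem unitary_schur:
  assumes "(A::complex mat) \<in> carrier_mat n n"
      and "char_poly A = (\<Prod> (e :: complex) \<leftarrow> es. [:- e, 1:])"
  shows "\<exists>B P. similar_mat_wit A B P (mat_adjoint P) \<and> upper_triangular B \<and> diag_mat B = es"
  using assms
proof (induct es arbitrary: n A)
  case Nil
  with degree_monic_char_poly[of A n] have n: "n = 0" by auto
  show ?case 
    by (rule exI[of _ A], rule exI[of _ "1\<^sub>m n"], insert Nil n,
        auto simp: diag_mat_def upper_triangular_def similar_mat_wit_def)
next
  case (Cons e es n A)
  let ?n1 = "n - 1"
  from Cons have A: "A \<in> carrier_mat n n" and dim: "dim_row A = n" by auto
  let ?cp = "char_poly A"
  from Cons(3)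
  have cp: "?cp = [: -e, 1 :] * (\<Prod>e \<leftarrow> es. [:- e, 1:])" by auto
  have mon: "monic (\<Prod>e\<leftarrow> es. [:- e, 1:])" by (rule monic_prod_list, auto)
  have deg: "degree ?cp = Suc (degree (\<Prod>e\<leftarrow> es. [:- e, 1:]))" unfolding cp
    by (subst degree_mult_eq, insert mon, auto)
  with degree_monic_char_poly[OF A] have n: "n \<noteq> 0" by auto
  define v0 where "v0 = find_eigenvector A e"
  define b where "b = basis_completion v0"
  define ws0 where "ws0 = gram_schmidt n b"
  define ws where "ws = map nv ws0"
  define v where "v = nv v0"
  define W where "W = mat_of_cols n ws"
  define W' where "W' = corthogonal_inv W"
  define A' where "A' = W' * A * W"
  obtain A1 A2 A0 A3 where splitA': "split_block A' 1 1 = (A1,A2,A0,A3)"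
    by (cases "split_block A' 1 1", auto)
  have e: "eigenvalue A e" 
    unfolding eigenvalue_root_char_poly[OF A] cp by simp
  from find_eigenvector[OF A e] have ev: "eigenvector A v0 e" unfolding v0_def .
  from this[unfolded eigenvector_def]
  have v0[simp]: "v0 \<in> carrier_vec n" and v00: "v0 \<noteq> 0\<^sub>v n" and ev0: "A *\<^sub>v v0 = e \<cdot>\<^sub>v v0" using A by auto
  interpret cof_vec_space n "TYPE(complex)" .
  from basis_completion[OF v0 v00, folded b_def]
  have span_b: "span (set b) = carrier_vec n" and dist_b: "distinct b" 
    and indep: "\<not> lin_dep (set b)" and b: "set b \<subseteq> carrier_vec n" and hdb: "hd b = v0" 
    and len_b: "length b = n" by auto
  from hdb len_b n obtain vs where bv: "b = v0 # vs" by (cases b, auto)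
  from gram_schmidt_result[OF b dist_b indep refl, folded ws0_def]
  have ws0: "set ws0 \<subseteq> carrier_vec n" "corthogonal ws0" "length ws0 = n" 
    by (auto simp: len_b)
  from gram_schmidt_hd[OF v0, of vs, folded bv] have hdws0: "hd ws0 = v0" unfolding ws0_def .
  have ws: "set ws \<subseteq> carrier_vec n" "corthogonal ws" "length ws = n"
    using ws0 nv_corthogonal[OF ws0(2) ws0(1)] unfolding ws_def by auto
  have hdws: "hd ws = v" unfolding ws_def v_def using hdws0 ws0(3) n
    by (cases ws0, auto)
  have v[simp]: "v \<in> carrier_vec n" unfolding v_def by simp
  have "v0 \<bullet>c v0 \<noteq> 0" using v00 conjugate_square_eq_0_vec[OF v0] by simp
  hence vv: "v \<bullet>c v = 1" unfolding v_def by (rule nv_self[OF v0])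
  have v0': "v \<noteq> 0\<^sub>v n" using vv v by (metis conjugate_square_eq_0_vec zero_neq_one)
  have eigen[simp]: "A *\<^sub>v v = e \<cdot>\<^sub>v v" unfolding v_def nv_def
    using ev0 A by (simp add: mult_mat_vec smult_smult_assoc mult.commute)
  have W'adj: "W' = mat_adjoint W" unfolding W'_def W_def ws_def
    by (rule nv_corthogonal_inv[OF ws0(2) ws0(1) ws0(3)])
  have orth_W: "corthogonal_mat W" using orthogonal_mat_of_cols ws unfolding W_def.
  have W: "W \<in> carrier_mat n n"
    using ws unfolding W_def using mat_of_cols_carrier(1)[of n ws] by auto
  have W': "W' \<in> carrier_mat n n" unfolding W'_def corthogonal_inv_def using W 
    by (auto simp: mat_of_rows_def)  
  from corthogonal_inv_result[OF orth_W] 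
  have W'W: "inverts_mat W' W" unfolding W'_def .
  hence WW': "inverts_mat W W'" using mat_mult_left_right_inverse[OF W' W] W' W
    unfolding inverts_mat_def by auto
  have A': "A' \<in> carrier_mat n n" using W W' A unfolding A'_def by auto
  have A'A_wit: "similar_mat_wit A' A W' W"
    by (rule similar_mat_witI[of _ _ n], insert W W' A A' W'W WW', auto simp: A'_def
    inverts_mat_def)
  hence A'A: "similar_mat A' A" unfolding similar_mat_def by blast
  from similar_mat_wit_sym[OF A'A_wit] have simAA': "similar_mat_wit A A' W W'" by auto
  let ?f = "(\<lambda> i. if i = 0 then e else 0)"
  have col0: "col A' 0 = vec n ?f"
    unfolding A'_def W'_def W_def
    using corthogonal_col_ev_0[OF A v v0' eigen n hdws ws].
  from A' n have "dim_row A' = 1 + ?n1" "dim_col A' = 1 + ?n1" by auto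
  from split_block[OF splitA' this] have A2: "A2 \<in> carrier_mat 1 ?n1"
    and A3: "A3 \<in> carrier_mat ?n1 ?n1" 
    and A'block: "A' = four_block_mat A1 A2 A0 A3" by auto
  have A1id: "A1 = mat 1 1 (\<lambda> _. e)"
    using splitA'[unfolded split_block_def Let_def] arg_cong[OF col0, of "\<lambda> v. v $ 0"] A' n
    by (auto simp: col_def)
  have A1: "A1 \<in> carrier_mat 1 1" unfolding A1id by auto
  {
    fix i
    assume "i < ?n1"
    with arg_cong[OF col0, of "\<lambda> v. v $ Suc i"] A'
    have "A' $$ (Suc i, 0) = 0" by auto
  } note A'0 = this
  have A0id: "A0 = 0\<^sub>m ?n1 1"
    using splitA'[unfolded split_block_def Let_def] A'0 A' by auto
  have A0: "A0 \<in> carrier_mat ?n1 1" unfolding A0id by auto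
  from cp char_poly_similar[OF A'A]
  have cp: "char_poly A' = [: -e,1 :] * (\<Prod> e \<leftarrow> es. [:- e, 1:])" by simp
  also have "char_poly A' = char_poly A1 * char_poly A3" 
    unfolding A'block A0id
    by (rule char_poly_four_block_zeros_col[OF A1 A2 A3])
  also have "char_poly A1 = [: -e,1 :]"
    by (simp add: A1id char_poly_defs det_def sign_def)
  finally have cp: "char_poly A3 = (\<Prod> e \<leftarrow> es. [:- e, 1:])"
    by (metis mult_cancel_left pCons_eq_0_iff zero_neq_one)
  from Cons(1)[OF A3 cp] obtain B P' where
   simIH: "similar_mat_wit A3 B P' (mat_adjoint P')" and ut: "upper_triangular B" and diag: "diag_mat B = es" by auto
  define Q' where "Q' = mat_adjoint P'"
  from similar_mat_witD2[OF A3 simIH[folded Q'_def]] 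
  have B: "B \<in> carrier_mat ?n1 ?n1" and P': "P' \<in> carrier_mat ?n1 ?n1" and Q': "Q' \<in> carrier_mat ?n1 ?n1" 
    and PQ': "P' * Q' = 1\<^sub>m ?n1" by auto
  let ?P' = "four_block_mat (1\<^sub>m 1) (0\<^sub>m 1 ?n1) (0\<^sub>m ?n1 1) P'"
  let ?Q' = "four_block_mat (1\<^sub>m 1) (0\<^sub>m 1 ?n1) (0\<^sub>m ?n1 1) Q'"
  define C where "C = four_block_mat A1 (A2 * P') A0 B"
  define P where "P = W * ?P'"
  have Pc: "?P' \<in> carrier_mat n n" using P' n by auto
  have Q: "mat_adjoint P = ?Q' * W'" unfolding P_def W'adj Q'_def
    by (subst adj_mult[OF W Pc], subst adj_four_block[OF P'], simp)
  have A0_eq: "A0 = P' * A0 * 1\<^sub>m 1" unfolding A0id using P' by auto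
  have simA'C: "similar_mat_wit A' C ?P' ?Q'" unfolding A'block C_def
    by (rule similar_mat_wit_four_block[OF similar_mat_wit_refl[OF A1] simIH[folded Q'_def] _ A0_eq A1 A3 A0],
    insert PQ' A2 P' Q', auto)
  have ut1: "upper_triangular A1" unfolding A1id by auto
  have ut: "upper_triangular C" unfolding C_def A0id
    by (intro upper_triangular_four_block[OF _ B ut1 ut], auto simp: A1id)
  from A1id have diagA1: "diag_mat A1 = [e]" unfolding diag_mat_def by auto
  from diag_four_block_mat[OF A1 B] have diag: "diag_mat C = e # es" unfolding diag diagA1 C_def by simp
  from ut similar_mat_wit_trans[OF simAA' simA'C, folded P_def Q] diag
  show ?case by blast
qed



declare index_mult_mat(1)[simp del]

section \<open>Hermitian diagonalization\<close>

lemma herm_diag: assumes A: "(A :: complex mat) \<in> carrier_mat n n" and h: "mat_adjoint A = A"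
  shows "\<exists>P B. P \<in> carrier_mat n n \<and> mat_adjoint P * P = 1\<^sub>m n \<and> P * mat_adjoint P = 1\<^sub>m n \<and>
     B \<in> carrier_mat n n \<and> A = P * B * mat_adjoint P \<and> diagonal_mat B"
proof -
  obtain es where "char_poly A = (\<Prod>a\<leftarrow>es. [:- a, 1:])" using char_poly_factorized[OF A] by auto
  from unitary_schur[OF A this] obtain B P where
    sim: "similar_mat_wit A B P (mat_adjoint P)" and ut: "upper_triangular B" by auto
  from sim A have P: "P \<in> carrier_mat n n" and B: "B \<in> carrier_mat n n"
    and PP: "P * mat_adjoint P = 1\<^sub>m n" and PP': "mat_adjoint P * P = 1\<^sub>m n"
    and AB: "A = P * B * mat_adjoint P"
    unfolding similar_mat_wit_def Let_def by auto
  have P': "mat_adjoint P \<in> carrier_mat n n" using P by simp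
  have BA: "B = mat_adjoint P * A * P"
  proof -
    have "mat_adjoint P * A * P = mat_adjoint P * (P * B * mat_adjoint P) * P" using AB by simp
    also have "\<dots> = (mat_adjoint P * P) * B * (mat_adjoint P * P)"
      using P P' B by (simp add: assoc_mult_mat[of _ n n _ n _ n])
    also have "\<dots> = B" using PP' B by simp
    finally show ?thesis by simp
  qed
  have hB: "mat_adjoint B = B"
  proof -
    have "mat_adjoint B = mat_adjoint (mat_adjoint P * A * P)" using BA by simp
    also have "\<dots> = mat_adjoint P * mat_adjoint (mat_adjoint P * A)"
      by (rule adj_mult[of _ n n _ n], insert P P' A, auto)
    also have "mat_adjoint (mat_adjoint P * A) = mat_adjoint A * P"
      by (subst adj_mult[of _ n n _ n], insert P P' A, auto)
    finally show ?thesis using h BA P P' A by (simp add: assoc_mult_mat[of _ n n _ n _ n])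
  qed
  have "diagonal_mat B" unfolding diagonal_mat_def
  proof (intro allI impI)
    fix i j assume i: "i < dim_row B" and j: "j < dim_col B" and ij: "i \<noteq> j"
    show "B $$ (i,j) = 0"
    proof (cases "j < i")
      case True thus ?thesis using ut i unfolding upper_triangular_def by auto
    next
      case False
      hence "i < j" using ij by auto
      hence "B $$ (j,i) = 0" using ut j B unfolding upper_triangular_def by auto
      moreover have "B $$ (i,j) = cnj (B $$ (j,i))" 
        using arg_cong[OF hB, of "\<lambda>M. M $$ (i,j)"] i j B by auto
      ultimately show ?thesis by simp
    qed
  qed
  thus ?thesis using P B PP PP' AB by blast
qed

definition tr :: "complex mat \<Rightarrow> complex" where
  "tr A = (\<Sum>k<dim_row A. A $$ (k,k))"

lemma tr_comm: assumes "A \<in> carrier_mat m n" "B \<in> carrier_mat n m"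
  shows "tr (A * B) = tr (B * A)"
proof -
  have "tr (A * B) = (\<Sum>i<m. \<Sum>k<n. A $$ (i,k) * B $$ (k,i))"
    unfolding tr_def using assms by (auto simp: mult_index)
  also have "\<dots> = (\<Sum>k<n. \<Sum>i<m. B $$ (k,i) * A $$ (i,k))"
    by (subst sum.swap, simp add: mult.commute)
  also have "\<dots> = tr (B * A)"
    unfolding tr_def using assms by (auto simp: mult_index)
  finally show ?thesis .
qed

lemma cnj_mult_self: "cnj z * z = complex_of_real ((cmod z)^2)"
  by (metis complex_norm_square mult.commute)

lemma frob_tr: assumes "X \<in> carrier_mat M N"
  shows "complex_of_real (frob_sq X) = tr (mat_adjoint X * X)"
proof -
  have "tr (mat_adjoint X * X) = (\<Sum>j<N. \<Sum>i<M. cnj (X $$ (i,j)) * X $$ (i,j))"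
    unfolding tr_def using assms by (auto simp: mult_index)
  also have "\<dots> = (\<Sum>j<N. \<Sum>i<M. complex_of_real ((cmod (X $$ (i,j)))^2))"
    by (simp add: cnj_mult_self)
  also have "\<dots> = complex_of_real (frob_sq X)"
    unfolding frob_sq_def using assms by (subst sum.swap, simp)
  finally show ?thesis by simp
qed

section \<open>Singular values from a diagonalization\<close>

lemma proots_prod_linear: "proots (\<Prod>a\<leftarrow>xs. [:- a, 1:]) = mset (xs :: complex list)"
proof (induct xs)
  case Nil thus ?case by simp
next
  case (Cons a xs)
  have "monic (\<Prod>a\<leftarrow>xs. [:- a, 1:])" by (rule monic_prod_list, auto)
  hence nz: "(\<Prod>a\<leftarrow>xs. [:- a, 1:]) \<noteq> 0" by auto
  have "proots (\<Prod>a\<leftarrow>a # xs. [:- a, 1:]) = proots [:- a, 1:] + proots (\<Prod>a\<leftarrow>xs. [:- a, 1:])"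
    using proots_mult[of "[:- a, 1:]" "\<Prod>a\<leftarrow>xs. [:- a, 1:]"] nz by simp
  thus ?case using Cons proots_linear_factor[of "-a"] by simp
qed

lemma sv_from_diag:
  assumes X: "X \<in> carrier_mat M N" and NM: "N \<le> M"
    and R: "R \<in> carrier_mat N N" "R * mat_adjoint R = 1\<^sub>m N" "mat_adjoint R * R = 1\<^sub>m N"
    and B: "B \<in> carrier_mat N N" "diagonal_mat B"
    and XX: "mat_adjoint X * X = R * B * mat_adjoint R"
  shows "singular_values X = mset (map (\<lambda>k. sqrt (Re (B $$ (k,k)))) [0..<N])"
    and "frob_sq X = (\<Sum>k<N. Re (B $$ (k,k)))"
proof -
  have R': "mat_adjoint R \<in> carrier_mat N N" using R by simp
  have XXc: "mat_adjoint X * X \<in> carrier_mat N N" using X by auto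
  have "similar_mat_wit (mat_adjoint X * X) B R (mat_adjoint R)"
    by (rule similar_mat_witI[OF R(2) R(3) XX XXc B(1) R(1) R'])
  hence "similar_mat (mat_adjoint X * X) B" unfolding similar_mat_def by blast
  from char_poly_similar[OF this] 
  have "char_poly (mat_adjoint X * X) = char_poly B" .
  also have "\<dots> = (\<Prod>a\<leftarrow>diag_mat B. [:- a, 1:])"
    by (rule char_poly_upper_triangular[OF B(1)], insert B, auto simp: upper_triangular_def diagonal_mat_def)
  finally have cp: "char_poly (mat_adjoint X * X) = (\<Prod>a\<leftarrow>diag_mat B. [:- a, 1:])" .
  have dB: "diag_mat B = map (\<lambda>k. B $$ (k,k)) [0..<N]" unfolding diag_mat_def using B by simp
  have pr: "proots (char_poly (mat_adjoint X * X)) = mset (diag_mat B)"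
    unfolding cp by (rule proots_prod_linear)
  show "singular_values X = mset (map (\<lambda>k. sqrt (Re (B $$ (k,k)))) [0..<N])"
    unfolding singular_values_def using X NM
    by (simp add: pr dB image_mset.compositionality o_def)
  have "complex_of_real (frob_sq X) = tr (R * B * mat_adjoint R)"
    unfolding frob_tr[OF X] XX ..
  also have "\<dots> = tr (mat_adjoint R * (R * B))"
    by (rule tr_comm, insert R B, auto)
  also have "mat_adjoint R * (R * B) = B"
    using R R' B by (simp add: assoc_mult_mat[symmetric, of _ N N _ N _ N])
  finally have "complex_of_real (frob_sq X) = tr B" .
  hence "frob_sq X = Re (tr B)" by (metis Re_complex_of_real)
  thus "frob_sq X = (\<Sum>k<N. Re (B $$ (k,k)))" unfolding tr_def using B by (simp add: Re_sum)
qed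



lemma z_cnj: "z * cnj z = (complex_of_real (cmod z))^2"
  by (metis complex_norm_square of_real_power)

lemma bessel:
  fixes z :: "nat \<Rightarrow> nat \<Rightarrow> complex" and b :: "nat \<Rightarrow> real"
  assumes orth: "\<And>k l. k < N \<Longrightarrow> l < N \<Longrightarrow> (\<Sum>i<M. cnj (z i k) * z i l) = (if k = l then complex_of_real (b k) else 0)"
    and j: "j < M"
  shows "(\<Sum>k<N. (if b k > 0 then (cmod (z j k))^2 / b k else 0)) \<le> 1"
proof -
  define c where "c k = (if b k > 0 then 1 / b k else 0)" for k
  define t where "t = (\<Sum>k<N. c k * (cmod (z j k))^2)"
  have lhs: "(\<Sum>k<N. (if b k > 0 then (cmod (z j k))^2 / b k else 0)) = t"
    unfolding t_def c_def by (rule sum.cong, auto)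
  have t0: "t \<ge> 0" unfolding t_def c_def by (intro sum_nonneg, auto)
  define p where "p i = (\<Sum>k<N. complex_of_real (c k) * z j k * cnj (z i k))" for i
  have ccb: "c k * c k * b k = c k" for k unfolding c_def by auto
  have "(\<Sum>i<M. p i * cnj (p i)) = 
     (\<Sum>i<M. \<Sum>k<N. \<Sum>l<N. (complex_of_real (c k * c l) * z j k * cnj (z j l)) * (cnj (z i k) * z i l))"
    unfolding p_def by (simp add: sum_product cnj_sum algebra_simps)
      (rule sum.cong[OF refl], rule sum.swap[THEN trans], simp add: algebra_simps)
  also have "\<dots> = (\<Sum>k<N. \<Sum>l<N. (complex_of_real (c k * c l) * z j k * cnj (z j l)) * (\<Sum>i<M. cnj (z i k) * z i l))"
    by (subst sum.swap, simp add: sum_distrib_left, rule sum.cong[OF refl], subst sum.swap, simp)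
  also have "\<dots> = (\<Sum>k<N. \<Sum>l<N. (complex_of_real (c k * c l) * z j k * cnj (z j l)) * (if k = l then complex_of_real (b k) else 0))"
    by (rule sum.cong[OF refl], rule sum.cong[OF refl], simp add: orth)
  also have "\<dots> = (\<Sum>k<N. complex_of_real (c k * c k * b k) * (z j k * cnj (z j k)))"
  proof (rule sum.cong[OF refl])
    fix k assume "k \<in> {..<N}"
    hence k: "k < N" by auto
    have "(\<Sum>l<N. (complex_of_real (c k * c l) * z j k * cnj (z j l)) * (if k = l then complex_of_real (b k) else 0))
      = (\<Sum>l<N. (if k = l then (complex_of_real (c k * c l) * z j k * cnj (z j l)) * complex_of_real (b k) else 0))"
      by (rule sum.cong, auto)
    also have "\<dots> = (complex_of_real (c k * c k) * z j k * cnj (z j k)) * complex_of_real (b k)"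
      using k by (simp add: sum.delta)
    finally show "(\<Sum>l<N. (complex_of_real (c k * c l) * z j k * cnj (z j l)) * (if k = l then complex_of_real (b k) else 0))
      = complex_of_real (c k * c k * b k) * (z j k * cnj (z j k))" by (simp add: algebra_simps)
  qed
  also have "\<dots> = complex_of_real t"
    unfolding t_def ccb by (simp add: z_cnj)
  finally have key: "(\<Sum>i<M. p i * cnj (p i)) = complex_of_real t" .
  have "(\<Sum>i<M. p i * cnj (p i)) = complex_of_real (\<Sum>i<M. (cmod (p i))^2)"
    by (simp add: z_cnj)
  with key have sq: "(\<Sum>i<M. (cmod (p i))^2) = t" by (metis of_real_eq_iff)
  have "p j = complex_of_real t"
    unfolding p_def t_def by (simp add: mult.assoc z_cnj)
  hence "t^2 = (cmod (p j))^2" using t0 by simp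
  also have "\<dots> \<le> (\<Sum>i<M. (cmod (p i))^2)"
    by (rule member_le_sum, insert j, auto)
  finally have "t^2 \<le> t" using sq by simp
  hence "t \<le> 1" using t0 by (cases "t \<le> 1", auto simp: power2_eq_square)
  thus ?thesis using lhs by simp
qed



lemma cs_weighted:
  fixes w t :: "nat \<Rightarrow> real"
  assumes w: "\<And>k. k \<in> S \<Longrightarrow> w k \<ge> 0"
  shows "(\<Sum>k\<in>S. w k * t k)^2 \<le> (\<Sum>k\<in>S. w k) * (\<Sum>k\<in>S. w k * (t k)^2)"
proof -
  have e1: "(\<Sum>k\<in>S. \<Sum>l\<in>S. w k * w l * (t k)^2) = (\<Sum>k\<in>S. w k) * (\<Sum>k\<in>S. w k * (t k)^2)"
    by (subst sum.swap) (simp add: sum_product algebra_simps)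
  have e2: "(\<Sum>k\<in>S. \<Sum>l\<in>S. w k * w l * (t l)^2) = (\<Sum>k\<in>S. w k) * (\<Sum>k\<in>S. w k * (t k)^2)"
    by (simp add: sum_product algebra_simps)
  have e3: "(\<Sum>k\<in>S. \<Sum>l\<in>S. w k * w l * (t k * t l)) = (\<Sum>k\<in>S. w k * t k)^2"
    by (simp add: sum_product algebra_simps power2_eq_square)
  have "0 \<le> (\<Sum>k\<in>S. \<Sum>l\<in>S. w k * w l * (t k - t l)^2)"
    using w by (intro sum_nonneg, auto)
  also have "\<dots> = (\<Sum>k\<in>S. \<Sum>l\<in>S. w k * w l * (t k)^2) + (\<Sum>k\<in>S. \<Sum>l\<in>S. w k * w l * (t l)^2)
      - 2 * (\<Sum>k\<in>S. \<Sum>l\<in>S. w k * w l * (t k * t l))"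
    by (simp add: power2_diff algebra_simps sum.distrib sum_subtractf sum_distrib_left)
  finally show ?thesis unfolding e1 e2 e3 by simp
qed

lemma jensen_sq:
  fixes w t :: "nat \<Rightarrow> real"
  assumes w: "\<And>k. k \<in> S \<Longrightarrow> w k \<ge> 0" and sw: "(\<Sum>k\<in>S. w k) \<le> 1"
  shows "(\<Sum>k\<in>S. w k * t k)^2 \<le> (\<Sum>k\<in>S. w k * (t k)^2)"
proof -
  have "(\<Sum>k\<in>S. w k * (t k)^2) \<ge> 0" using w by (intro sum_nonneg, auto)
  hence "(\<Sum>k\<in>S. w k) * (\<Sum>k\<in>S. w k * (t k)^2) \<le> (\<Sum>k\<in>S. w k * (t k)^2)"
    using sw by (simp add: mult_left_le_one_le sum_nonneg w)
  with cs_weighted[of S w t, OF w] show ?thesis by linarith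
qed

definition Gf :: "real \<Rightarrow> real \<Rightarrow> real \<Rightarrow> real" where
  "Gf s0 \<alpha> x = 2 * s0 * x + (max (x - s0) 0)^2 + \<alpha> / 2 * x^2"

lemma Gf_nonneg: "s0 > 0 \<Longrightarrow> \<alpha> \<ge> 0 \<Longrightarrow> x \<ge> 0 \<Longrightarrow> Gf s0 \<alpha> x \<ge> 0"
  unfolding Gf_def by auto

lemma Gf_mono: assumes "s0 > 0" "\<alpha> \<ge> 0" "0 \<le> x" "x \<le> y" shows "Gf s0 \<alpha> x \<le> Gf s0 \<alpha> y"
proof -
  have 1: "(max (x - s0) 0)^2 \<le> (max (y - s0) 0)^2" using assms by (intro power_mono, auto)
  have "x^2 \<le> y^2" using assms by (intro power_mono, auto)
  hence 2: "\<alpha> / 2 * x^2 \<le> \<alpha> / 2 * y^2" using assms by (intro mult_left_mono, auto)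
  have 3: "2 * s0 * x \<le> 2 * s0 * y" using assms by auto
  show ?thesis unfolding Gf_def using 1 2 3 by linarith
qed

lemma Gf_jensen:
  fixes w s :: "nat \<Rightarrow> real"
  assumes s0: "s0 > 0" and a: "\<alpha> \<ge> 0" and fin: "finite S"
    and w: "\<And>k. k \<in> S \<Longrightarrow> w k \<ge> 0" and s: "\<And>k. k \<in> S \<Longrightarrow> s k \<ge> 0" and sw: "(\<Sum>k\<in>S. w k) \<le> 1"
  shows "Gf s0 \<alpha> (\<Sum>k\<in>S. w k * s k) \<le> (\<Sum>k\<in>S. w k * Gf s0 \<alpha> (s k))"
proof -
  let ?t = "\<lambda>k. max (s k - s0) 0"
  have "(\<Sum>k\<in>S. w k * s k) - s0 \<le> (\<Sum>k\<in>S. w k * s k) - s0 * (\<Sum>k\<in>S. w k)"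
    using sw s0 by (simp add: mult_left_le_one_le) 
  also have "\<dots> = (\<Sum>k\<in>S. w k * (s k - s0))" by (simp add: sum_distrib_left algebra_simps sum_subtractf)
  also have "\<dots> \<le> (\<Sum>k\<in>S. w k * ?t k)" using w by (intro sum_mono mult_left_mono, auto)
  finally have m1: "(\<Sum>k\<in>S. w k * s k) - s0 \<le> (\<Sum>k\<in>S. w k * ?t k)" .
  have m2: "0 \<le> (\<Sum>k\<in>S. w k * ?t k)" using w by (intro sum_nonneg, auto)
  have "(max ((\<Sum>k\<in>S. w k * s k) - s0) 0)^2 \<le> (\<Sum>k\<in>S. w k * ?t k)^2"
    using m1 m2 by (intro power_mono, auto)
  also have "\<dots> \<le> (\<Sum>k\<in>S. w k * (?t k)^2)" by (rule jensen_sq[OF w sw])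
  finally have p1: "(max ((\<Sum>k\<in>S. w k * s k) - s0) 0)^2 \<le> (\<Sum>k\<in>S. w k * (?t k)^2)" .
  have p2: "\<alpha> / 2 * (\<Sum>k\<in>S. w k * s k)^2 \<le> \<alpha> / 2 * (\<Sum>k\<in>S. w k * (s k)^2)"
    using jensen_sq[OF w sw, of s] a by (intro mult_left_mono, auto)
  have "Gf s0 \<alpha> (\<Sum>k\<in>S. w k * s k) \<le> 2 * s0 * (\<Sum>k\<in>S. w k * s k) + (\<Sum>k\<in>S. w k * (?t k)^2) + \<alpha> / 2 * (\<Sum>k\<in>S. w k * (s k)^2)"
    unfolding Gf_def using p1 p2 by linarith
  also have "\<dots> = (\<Sum>k\<in>S. w k * Gf s0 \<alpha> (s k))"
    unfolding Gf_def by (simp add: sum_distrib_left sum.distrib algebra_simps)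
  finally show ?thesis .
qed



lemma f_alpha_nonneg: "s0 > 0 \<Longrightarrow> \<alpha> \<ge> 0 \<Longrightarrow> f_alpha s0 \<alpha> x \<ge> 0"
  unfolding f_alpha_def by (auto simp: divide_simps)

lemma Gf_fy:
  assumes s0: "s0 > 0" and a: "\<alpha> \<ge> 0" and x: "x \<ge> 0" and p: "\<phi> \<ge> 0"
  shows "Gf s0 \<alpha> (f_alpha s0 \<alpha> \<phi>) - 2 * \<phi> * f_alpha s0 \<alpha> \<phi> \<le> Gf s0 \<alpha> x - 2 * \<phi> * x"
proof -
  have Gx: "Gf s0 \<alpha> x \<ge> 2 * s0 * x + \<alpha> / 2 * x^2" unfolding Gf_def by auto
  consider (c1) "\<phi> < s0" | (c2) "s0 \<le> \<phi>" "\<phi> < (1 + \<alpha>/2) * s0" | (c3) "(1 + \<alpha>/2) * s0 \<le> \<phi>" by linarith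
  thus ?thesis
  proof cases
    case c1
    hence f: "f_alpha s0 \<alpha> \<phi> = 0" unfolding f_alpha_def by auto
    have 1: "0 \<le> 2 * (s0 - \<phi>) * x + \<alpha> / 2 * x^2" using c1 x a by auto
    have 2: "2 * (s0 - \<phi>) * x = 2 * s0 * x - 2 * \<phi> * x" by (simp add: algebra_simps)
    have G0: "Gf s0 \<alpha> 0 = 0" unfolding Gf_def using s0 by simp
    show ?thesis unfolding f G0 using Gx 1 2 by linarith
  next
    case c2
    hence a0: "\<alpha> > 0" using s0 a by (cases "\<alpha> = 0", auto)
    define c where "c = 2 / \<alpha> * (\<phi> - s0)"
    have f: "f_alpha s0 \<alpha> \<phi> = c" unfolding f_alpha_def c_def using c2 by auto
    have c0: "c \<ge> 0" "c < s0" unfolding c_def using c2 a0 by (auto simp: field_simps)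
    have Gc: "Gf s0 \<alpha> c = 2 * s0 * c + \<alpha> / 2 * c^2" unfolding Gf_def using c0 by auto
    have pc: "\<phi> - s0 = \<alpha> / 2 * c" unfolding c_def using a0 by auto
    have "2 * s0 * c + \<alpha> / 2 * c^2 - 2 * \<phi> * c \<le> 2 * s0 * x + \<alpha> / 2 * x^2 - 2 * \<phi> * x"
    proof -
      have "(2 * s0 * x + \<alpha> / 2 * x^2 - 2 * \<phi> * x) - (2 * s0 * c + \<alpha> / 2 * c^2 - 2 * \<phi> * c)
          = \<alpha> / 2 * (x - c)^2" 
        using pc by (simp add: power2_eq_square algebra_simps)
      also have "\<dots> \<ge> 0" using a by auto
      finally show ?thesis by simp
    qed
    thus ?thesis unfolding f using Gx Gc by linarith
  next
    case c3
    define \<beta> where "\<beta> = 1 + \<alpha>/2"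
    have b: "\<beta> \<ge> 1" unfolding \<beta>_def using a by auto
    define c where "c = \<phi> / \<beta>"
    have "s0 \<le> (1 + \<alpha>/2) * s0" using s0 a by (simp add: algebra_simps)
    hence n1: "\<not> \<phi> < s0" using c3 by linarith
    have f: "f_alpha s0 \<alpha> \<phi> = c" unfolding f_alpha_def c_def \<beta>_def using c3 n1 by auto
    have cs: "c \<ge> s0" unfolding c_def using c3 b by (auto simp: field_simps \<beta>_def)
    have pc: "\<phi> = \<beta> * c" unfolding c_def using b by auto
    have Gc: "Gf s0 \<alpha> c - 2 * \<phi> * c = s0^2 - \<beta> * c^2"
      unfolding Gf_def using cs pc by (simp add: \<beta>_def power2_eq_square algebra_simps)
    show ?thesis
    proof (cases "x \<ge> s0")
      case True
      have "Gf s0 \<alpha> x - 2 * \<phi> * x - (s0^2 - \<beta> * c^2) = \<beta> * (x - c)^2"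
        unfolding Gf_def using True pc by (simp add: \<beta>_def power2_eq_square algebra_simps)
      also have "\<dots> \<ge> 0" using b by auto
      finally show ?thesis using f Gc by simp
    next
      case False
      have Gx: "Gf s0 \<alpha> x = 2 * s0 * x + \<alpha> / 2 * x^2" unfolding Gf_def using False by auto
      have "(\<alpha> / 2 * x^2 - 2 * (\<phi> - s0) * x) - (\<alpha> / 2 * s0^2 - 2 * (\<phi> - s0) * s0)
         = (s0 - x) * (2 * (\<phi> - s0) - \<alpha> / 2 * (x + s0))"
        by (simp add: power2_eq_square field_simps)
      also have "\<dots> \<ge> 0"
      proof -
        have h1: "2 * (\<phi> - s0) - \<alpha> / 2 * (x + s0) \<ge> 2 * (\<phi> - s0) - \<alpha> * s0"
        proof -
          have "\<alpha> * (x + s0) \<le> \<alpha> * (2 * s0)" using False a by (intro mult_left_mono, auto)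
          thus ?thesis by simp
        qed
        have h2: "2 * (\<phi> - s0) - \<alpha> * s0 \<ge> 0" using c3 by (auto simp: algebra_simps)
        show ?thesis using False h1 h2 by (intro mult_nonneg_nonneg, auto)
      qed
      finally have 1: "\<alpha> / 2 * x^2 - 2 * (\<phi> - s0) * x \<ge> \<alpha> / 2 * s0^2 - 2 * (\<phi> - s0) * s0" by simp
      have 2: "\<alpha> / 2 * s0^2 - 2 * (\<phi> - s0) * s0 - (s0^2 - \<beta> * c^2) = \<beta> * (s0 - c)^2"
        using pc by (simp add: \<beta>_def power2_eq_square algebra_simps)
      have 3: "\<beta> * (s0 - c)^2 \<ge> 0" using b by auto
      show ?thesis using f Gc Gx 1 2 3 by (simp add: algebra_simps)
    qed
  qed
qed



lemma core:
  fixes Y P B :: "complex mat"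
  assumes Y: "Y \<in> carrier_mat M N" and NM: "N \<le> M"
    and P: "P \<in> carrier_mat N N" and PP: "P * mat_adjoint P = 1\<^sub>m N" and PP': "mat_adjoint P * P = 1\<^sub>m N"
    and B: "B \<in> carrier_mat N N" and Bd: "diagonal_mat B"
    and YY: "mat_adjoint Y * Y = P * B * mat_adjoint P"
    and s0: "s0 > 0" and a: "\<alpha> \<ge> 0"
  shows "(\<Sum>j<N. Gf s0 \<alpha> (cmod (Y $$ (j,j)))) \<le> (\<Sum>k<N. Gf s0 \<alpha> (sqrt (Re (B $$ (k,k)))))"
proof -
  define Z where "Z = Y * P"
  have Z: "Z \<in> carrier_mat M N" unfolding Z_def using Y P by auto
  have P': "mat_adjoint P \<in> carrier_mat N N" using P by simp
  have Y': "mat_adjoint Y \<in> carrier_mat N M" using Y by simp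
  have ZZ: "mat_adjoint Z * Z = B"
  proof -
    have "mat_adjoint Z * Z = (mat_adjoint P * mat_adjoint Y) * (Y * P)"
      unfolding Z_def by (subst adj_mult[OF Y P], simp)
    also have "\<dots> = mat_adjoint P * (mat_adjoint Y * (Y * P))"
      using P P' Y Y' by (subst assoc_mult_mat[of _ N N _ M _ N], auto)
    also have "mat_adjoint Y * (Y * P) = (mat_adjoint Y * Y) * P"
      using P Y Y' by (subst assoc_mult_mat[of _ N M _ N _ N], auto)
    also have "mat_adjoint P * ((mat_adjoint Y * Y) * P) = mat_adjoint P * (mat_adjoint Y * Y) * P"
      using P P' Y Y' by (subst assoc_mult_mat[of _ N N _ N _ N], auto)
    also have "\<dots> = (mat_adjoint P * P) * B * (mat_adjoint P * P)"
      unfolding YY using P P' B by (simp add: assoc_mult_mat[of _ N N _ N _ N])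
    also have "\<dots> = B" using PP' B by simp
    finally show ?thesis .
  qed
  have YZ: "Y = Z * mat_adjoint P"
  proof -
    have "Z * mat_adjoint P = Y * (P * mat_adjoint P)" unfolding Z_def using Y P P' by (simp add: assoc_mult_mat)
    thus ?thesis using PP Y by simp
  qed
  define b where "b k = Re (B $$ (k,k))" for k
  have Zkl: "(\<Sum>i<M. cnj (Z $$ (i,k)) * Z $$ (i,l)) = B $$ (k,l)" if "k < N" "l < N" for k l
  proof -
    have "(mat_adjoint Z * Z) $$ (k,l) = (\<Sum>i<M. cnj (Z $$ (i,k)) * Z $$ (i,l))"
      using Z that by (simp add: mult_index)
    thus ?thesis using ZZ by simp
  qed
  have bsum: "b k = (\<Sum>i<M. (cmod (Z $$ (i,k)))^2)" and Bkk: "B $$ (k,k) = complex_of_real (b k)" if "k < N" for k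
  proof -
    have "B $$ (k,k) = (\<Sum>i<M. complex_of_real ((cmod (Z $$ (i,k)))^2))"
      using Zkl[OF that that] by (simp add: cnj_mult_self)
    hence e: "B $$ (k,k) = complex_of_real (\<Sum>i<M. (cmod (Z $$ (i,k)))^2)" by simp
    thus "b k = (\<Sum>i<M. (cmod (Z $$ (i,k)))^2)" unfolding b_def by simp
    thus "B $$ (k,k) = complex_of_real (b k)" using e by simp
  qed
  have b0: "b k \<ge> 0" if "k < N" for k unfolding bsum[OF that] by (intro sum_nonneg, auto)
  have orth: "(\<Sum>i<M. cnj (Z $$ (i,k)) * Z $$ (i,l)) = (if k = l then complex_of_real (b k) else 0)"
    if "k < N" "l < N" for k l
    using Zkl[OF that] Bd B that Bkk unfolding diagonal_mat_def by auto
  define p where "p j k = (if b k > 0 then (cmod (Z $$ (j,k)))^2 / b k else 0)" for j k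
  define q where "q j k = (cmod (P $$ (j,k)))^2" for j k
  define w where "w j k = (p j k + q j k) / 2" for j k
  define s where "s k = sqrt (b k)" for k
  have p0: "p j k \<ge> 0" for j k unfolding p_def by auto
  have q0: "q j k \<ge> 0" for j k unfolding q_def by auto
  have w0: "w j k \<ge> 0" for j k unfolding w_def using p0 q0 by (simp add: add_nonneg_nonneg)
  have s0': "s k \<ge> 0" if "k < N" for k unfolding s_def using b0[OF that] by auto
  have bes: "(\<Sum>k<N. p j k) \<le> 1" if "j < M" for j
    unfolding p_def by (rule bessel[OF orth that], auto)
  have rowP: "(\<Sum>k<N. q j k) = 1" if "j < N" for j
  proof -
    have "(P * mat_adjoint P) $$ (j,j) = (\<Sum>k<N. P $$ (j,k) * cnj (P $$ (j,k)))"
      using P that by (simp add: mult_index)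
    also have "\<dots> = complex_of_real (\<Sum>k<N. q j k)" unfolding q_def by (simp add: z_cnj)
    finally have "complex_of_real (\<Sum>k<N. q j k) = 1" using PP that by simp
    thus ?thesis by (metis of_real_eq_1_iff)
  qed
  have colP: "(\<Sum>j<N. q j k) = 1" if "k < N" for k
  proof -
    have "(mat_adjoint P * P) $$ (k,k) = (\<Sum>j<N. cnj (P $$ (j,k)) * P $$ (j,k))"
      using P that by (simp add: mult_index)
    also have "\<dots> = complex_of_real (\<Sum>j<N. q j k)" unfolding q_def by (simp add: cnj_mult_self)
    finally have "complex_of_real (\<Sum>j<N. q j k) = 1" using PP' that by simp
    thus ?thesis by (metis of_real_eq_1_iff)
  qed
  have colp: "(\<Sum>j<N. p j k) \<le> 1" if "k < N" for k
  proof -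
    have "(\<Sum>j<N. p j k) \<le> (\<Sum>j<M. p j k)" using NM p0 by (intro sum_mono2, auto)
    also have "\<dots> \<le> 1"
    proof (cases "b k > 0")
      case True
      have "(\<Sum>j<M. p j k) = (\<Sum>j<M. (cmod (Z $$ (j,k)))^2) / b k" unfolding p_def using True
        by (simp add: sum_divide_distrib)
      also have "\<dots> = 1" using True bsum[OF that] by simp
      finally show ?thesis by simp
    next
      case False thus ?thesis unfolding p_def by simp
    qed
    finally show ?thesis .
  qed
  have rowW: "(\<Sum>k<N. w j k) \<le> 1" if "j < N" for j
    unfolding w_def using bes[of j] rowP[OF that] that NM by (simp add: sum.distrib sum_divide_distrib[symmetric])
  have colW: "(\<Sum>j<N. w j k) \<le> 1" if "k < N" for k
    unfolding w_def using colp[OF that] colP[OF that] by (simp add: sum.distrib sum_divide_distrib[symmetric])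
  have entry: "cmod (Z $$ (j,k)) * cmod (P $$ (j,k)) \<le> w j k * s k" if "j < M" "k < N" for j k
  proof (cases "b k > 0")
    case True
    define u where "u = cmod (Z $$ (j,k)) / s k"
    define v where "v = cmod (P $$ (j,k))"
    have sk: "s k > 0" unfolding s_def using True by auto
    have "u^2 = p j k" unfolding u_def p_def s_def using True by (simp add: power_divide)
    moreover have "v^2 = q j k" unfolding v_def q_def by simp
    moreover have "2 * u * v \<le> u^2 + v^2" by (simp add: sum_squares_bound)
    moreover have "cmod (Z $$ (j,k)) = s k * u" unfolding u_def using sk by simp
    ultimately have "cmod (Z $$ (j,k)) * cmod (P $$ (j,k)) = s k * (u * v)" "u * v \<le> w j k"
      unfolding w_def v_def by (auto simp: algebra_simps)
    thus ?thesis using sk by (simp add: mult.commute mult_left_mono)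
  next
    case False
    hence "b k = 0" using b0[OF that(2)] by auto
    hence "(\<Sum>i<M. (cmod (Z $$ (i,k)))^2) = 0" using bsum[OF that(2)] by simp
    hence "(cmod (Z $$ (j,k)))^2 = 0" using that(1) by (subst (asm) sum_nonneg_eq_0_iff, auto)
    thus ?thesis using w0 s0'[OF that(2)] by (simp add: mult_nonneg_nonneg)
  qed
  have Yjj: "cmod (Y $$ (j,j)) \<le> (\<Sum>k<N. w j k * s k)" if "j < N" for j
  proof -
    have "Y $$ (j,j) = (\<Sum>k<N. Z $$ (j,k) * cnj (P $$ (j,k)))"
      using that NM Z P by (subst YZ, simp add: mult_index)
    hence "cmod (Y $$ (j,j)) \<le> (\<Sum>k<N. cmod (Z $$ (j,k)) * cmod (P $$ (j,k)))"
      by (simp add: norm_sum[THEN order_trans] norm_mult)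
    also have "\<dots> \<le> (\<Sum>k<N. w j k * s k)" using that NM by (intro sum_mono entry, auto)
    finally show ?thesis .
  qed
  have "(\<Sum>j<N. Gf s0 \<alpha> (cmod (Y $$ (j,j)))) \<le> (\<Sum>j<N. \<Sum>k<N. w j k * Gf s0 \<alpha> (s k))"
  proof (rule sum_mono)
    fix j assume "j \<in> {..<N}"
    hence j: "j < N" by auto
    have "Gf s0 \<alpha> (cmod (Y $$ (j,j))) \<le> Gf s0 \<alpha> (\<Sum>k<N. w j k * s k)"
      by (rule Gf_mono[OF s0 a _ Yjj[OF j]], simp)
    also have "\<dots> \<le> (\<Sum>k<N. w j k * Gf s0 \<alpha> (s k))"
      by (rule Gf_jensen[OF s0 a], insert w0 s0' rowW[OF j], auto)
    finally show "Gf s0 \<alpha> (cmod (Y $$ (j,j))) \<le> (\<Sum>k<N. w j k * Gf s0 \<alpha> (s k))" .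
  qed
  also have "\<dots> = (\<Sum>k<N. (\<Sum>j<N. w j k) * Gf s0 \<alpha> (s k))"
    by (subst sum.swap, simp add: sum_distrib_right)
  also have "\<dots> \<le> (\<Sum>k<N. Gf s0 \<alpha> (s k))"
  proof (rule sum_mono)
    fix k assume "k \<in> {..<N}"
    hence k: "k < N" by auto
    have "Gf s0 \<alpha> (s k) \<ge> 0" by (rule Gf_nonneg[OF s0 a s0'[OF k]])
    thus "(\<Sum>j<N. w j k) * Gf s0 \<alpha> (s k) \<le> Gf s0 \<alpha> (s k)"
      using colW[OF k] by (simp add: mult_left_le_one_le sum_nonneg w0)
  qed
  finally show ?thesis unfolding s_def b_def .
qed



lemma unitary_conj: assumes R: "R \<in> carrier_mat n n" and B: "B \<in> carrier_mat n n"
  and RR: "mat_adjoint R * R = 1\<^sub>m n"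
  shows "mat_adjoint R * (R * B * mat_adjoint R) * R = B"
proof -
  have R': "mat_adjoint R \<in> carrier_mat n n" using R by simp
  have "mat_adjoint R * (R * B * mat_adjoint R) * R = (mat_adjoint R * R) * B * (mat_adjoint R * R)"
    using R R' B by (simp add: assoc_mult_mat[of _ n n _ n _ n])
  thus ?thesis using RR B by simp
qed

lemma gram_diag_nonneg:
  assumes X: "X \<in> carrier_mat M N"
    and R: "R \<in> carrier_mat N N" "mat_adjoint R * R = 1\<^sub>m N"
    and B: "B \<in> carrier_mat N N"
    and XX: "mat_adjoint X * X = R * B * mat_adjoint R" and k: "k < N"
  shows "Re (B $$ (k,k)) \<ge> 0"
proof -
  have R': "mat_adjoint R \<in> carrier_mat N N" using R by simp
  have X': "mat_adjoint X \<in> carrier_mat N M" using X by simp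
  define Z where "Z = X * R"
  have Z: "Z \<in> carrier_mat M N" unfolding Z_def using X R by auto
  have "B = mat_adjoint R * (mat_adjoint X * X) * R" unfolding XX using unitary_conj[OF R(1) B R(2)] by simp
  also have "\<dots> = mat_adjoint Z * Z"
  proof -
    have "mat_adjoint Z * Z = (mat_adjoint R * mat_adjoint X) * (X * R)"
      unfolding Z_def by (subst adj_mult[OF X R(1)], simp)
    also have "\<dots> = mat_adjoint R * (mat_adjoint X * (X * R))"
      using R R' X X' by (subst assoc_mult_mat[of _ N N _ M _ N], auto)
    also have "mat_adjoint X * (X * R) = (mat_adjoint X * X) * R"
      using R X X' by (subst assoc_mult_mat[of _ N M _ N _ N], auto)
    also have "mat_adjoint R * ((mat_adjoint X * X) * R) = mat_adjoint R * (mat_adjoint X * X) * R"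
      using R R' X X' by (subst assoc_mult_mat[of _ N N _ N _ N], auto)
    finally show ?thesis by simp
  qed
  finally have "B $$ (k,k) = (\<Sum>i<M. cnj (Z $$ (i,k)) * Z $$ (i,k))" using Z k by (simp add: mult_index)
  also have "\<dots> = complex_of_real (\<Sum>i<M. (cmod (Z $$ (i,k)))^2)" by (simp add: cnj_mult_self)
  finally show ?thesis by (simp add: sum_nonneg)
qed

definition ip :: "complex mat \<Rightarrow> complex mat \<Rightarrow> complex" where
  "ip X F = (\<Sum>i<dim_row X. \<Sum>j<dim_col X. X $$ (i,j) * cnj (F $$ (i,j)))"

lemma cmod_diff_sq: "(cmod (x - f))^2 = (cmod x)^2 - 2 * Re (x * cnj f) + (cmod f)^2"
  unfolding cmod_power2 by (simp add: power2_eq_square algebra_simps)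

lemma frob_minus: assumes "X \<in> carrier_mat M N" "F \<in> carrier_mat M N"
  shows "frob_sq (X - F) = frob_sq X - 2 * Re (ip X F) + frob_sq F"
  using assms unfolding frob_sq_def ip_def
  by (simp add: cmod_diff_sq sum.distrib sum_subtractf sum_distrib_left Re_sum)

lemma ip_tr: assumes "X \<in> carrier_mat M N" "F \<in> carrier_mat M N"
  shows "ip X F = tr (mat_adjoint F * X)"
  using assms unfolding ip_def tr_def 
  by (simp add: mult_index, subst sum.swap, simp add: mult.commute)



lemma sum_mset_map_upt: "(\<Sum>s\<in>#mset (map f [0..<N]). h s) = (\<Sum>k<N. h (f k))"
  by (simp add: sum_unfold_sum_mset image_mset.compositionality o_def atLeast0LessThan)

lemma Gf_identity: assumes "b \<ge> 0"
  shows "s0^2 - (max (s0 - sqrt b) 0)^2 + (1 + \<alpha>/2) * b = Gf s0 \<alpha> (sqrt b)"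
proof -
  have sq: "(sqrt b)^2 = b" using assms by simp
  show ?thesis unfolding Gf_def
    using assms by (cases "sqrt b < s0", auto simp: max_def power2_diff sq algebra_simps)
qed

lemma obj_formula:
  assumes X: "X \<in> carrier_mat M N" and NM: "N \<le> M" and F: "F \<in> carrier_mat M N"
    and R: "R \<in> carrier_mat N N" "R * mat_adjoint R = 1\<^sub>m N" "mat_adjoint R * R = 1\<^sub>m N"
    and B: "B \<in> carrier_mat N N" "diagonal_mat B"
    and XX: "mat_adjoint X * X = R * B * mat_adjoint R"
  shows "N_F_star s0 F X + \<alpha>/2 * frob_sq X
     = (\<Sum>k<N. Gf s0 \<alpha> (sqrt (Re (B $$ (k,k))))) - 2 * Re (ip X F) + frob_sq F"
proof -
  note sv = sv_from_diag[OF X NM R B XX]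
  have nn: "Re (B $$ (k,k)) \<ge> 0" if "k < N" for k
    by (rule gram_diag_nonneg[OF X R(1) R(3) B(1) XX that])
  have "N_F_star s0 F X + \<alpha>/2 * frob_sq X
     = (\<Sum>k<N. s0^2 - (max (s0 - sqrt (Re (B $$ (k,k)))) 0)^2) + (frob_sq X - 2 * Re (ip X F) + frob_sq F)
       + \<alpha>/2 * frob_sq X"
    unfolding N_F_star_def sv(1) sum_mset_map_upt frob_minus[OF X F] ..
  also have "\<dots> = (\<Sum>k<N. s0^2 - (max (s0 - sqrt (Re (B $$ (k,k)))) 0)^2 + (1 + \<alpha>/2) * Re (B $$ (k,k)))
      - 2 * Re (ip X F) + frob_sq F"
    unfolding sv(2) by (simp add: sum.distrib sum_subtractf sum_distrib_left sum_divide_distrib algebra_simps)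
  also have "\<dots> = (\<Sum>k<N. Gf s0 \<alpha> (sqrt (Re (B $$ (k,k))))) - 2 * Re (ip X F) + frob_sq F"
    using nn by (simp add: Gf_identity)
  finally show ?thesis .
qed

lemma ip_svd:
  assumes X: "X \<in> carrier_mat M N" and NM: "N \<le> M"
    and U: "U \<in> carrier_mat M M" and V: "V \<in> carrier_mat N N"
  shows "ip X (U * diag_rect M N (\<lambda>j. complex_of_real (\<phi> j)) * mat_adjoint V)
     = (\<Sum>j<N. complex_of_real (\<phi> j) * (mat_adjoint U * X * V) $$ (j,j))"
proof -
  define D where "D = diag_rect M N (\<lambda>j. complex_of_real (\<phi> j))"
  have D: "D \<in> carrier_mat M N" unfolding D_def diag_rect_def by auto
  have D': "mat_adjoint D \<in> carrier_mat N M" using D by simp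
  have U': "mat_adjoint U \<in> carrier_mat M M" using U by simp
  have V': "mat_adjoint V \<in> carrier_mat N N" using V by simp
  have F: "U * D * mat_adjoint V \<in> carrier_mat M N" using U D V' by auto
  have aF: "mat_adjoint (U * D * mat_adjoint V) = V * (mat_adjoint D * mat_adjoint U)"
    using U D V' by (simp add: adj_mult[of _ M N _ N] adj_mult[of _ M M _ N])
  have "ip X (U * D * mat_adjoint V) = tr (V * (mat_adjoint D * mat_adjoint U) * X)"
    unfolding ip_tr[OF X F] aF ..
  also have "V * (mat_adjoint D * mat_adjoint U) * X = V * (mat_adjoint D * mat_adjoint U * X)"
    using V D' U' X by (subst assoc_mult_mat[of _ N N _ M _ N], auto)
  also have "tr \<dots> = tr (mat_adjoint D * mat_adjoint U * X * V)"
    by (rule tr_comm, insert V D' U' X, auto)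
  also have "mat_adjoint D * mat_adjoint U * X * V = mat_adjoint D * (mat_adjoint U * X * V)"
    using V D' U' X by (simp add: assoc_mult_mat[of _ N M _ M _ N] assoc_mult_mat[of _ N M _ N _ N]
        assoc_mult_mat[of _ M M _ N _ N])
  also have "tr (mat_adjoint D * (mat_adjoint U * X * V)) = (\<Sum>j<N. \<Sum>i<M. cnj (D $$ (i,j)) * (mat_adjoint U * X * V) $$ (i,j))"
    unfolding tr_def using D U' X V by (simp add: mult_index)
  also have "\<dots> = (\<Sum>j<N. complex_of_real (\<phi> j) * (mat_adjoint U * X * V) $$ (j,j))"
  proof (rule sum.cong[OF refl])
    fix j assume "j \<in> {..<N}"
    hence j: "j < N" "j < M" using NM by auto
    have "(\<Sum>i<M. cnj (D $$ (i,j)) * (mat_adjoint U * X * V) $$ (i,j))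
       = (\<Sum>i<M. if i = j then complex_of_real (\<phi> j) * (mat_adjoint U * X * V) $$ (j,j) else 0)"
      by (rule sum.cong[OF refl], insert j, auto simp: D_def diag_rect_def)
    also have "\<dots> = complex_of_real (\<phi> j) * (mat_adjoint U * X * V) $$ (j,j)" using j by simp
    finally show "(\<Sum>i<M. cnj (D $$ (i,j)) * (mat_adjoint U * X * V) $$ (i,j)) = complex_of_real (\<phi> j) * (mat_adjoint U * X * V) $$ (j,j)" .
  qed
  finally show ?thesis unfolding D_def .
qed



lemma gram_unitary:
  fixes U V Y :: "complex mat"
  assumes U: "U \<in> carrier_mat M M" and V: "V \<in> carrier_mat N N" and Y: "Y \<in> carrier_mat M N"
    and UU: "mat_adjoint U * U = 1\<^sub>m M"
  shows "mat_adjoint (U * Y * mat_adjoint V) * (U * Y * mat_adjoint V) = V * (mat_adjoint Y * Y) * mat_adjoint V"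
proof -
  have U': "mat_adjoint U \<in> carrier_mat M M" using U by simp
  have V': "mat_adjoint V \<in> carrier_mat N N" using V by simp
  have Y': "mat_adjoint Y \<in> carrier_mat N M" using Y by simp
  have a: "mat_adjoint (U * Y * mat_adjoint V) = V * (mat_adjoint Y * mat_adjoint U)"
    using U Y V' by (simp add: adj_mult[of _ M N _ N] adj_mult[of _ M M _ N])
  have "V * (mat_adjoint Y * mat_adjoint U) * (U * Y * mat_adjoint V)
      = V * (mat_adjoint Y * (mat_adjoint U * U) * Y) * mat_adjoint V"
    using U U' V V' Y Y'
    by (simp add: assoc_mult_mat[of _ N N _ M _ N] assoc_mult_mat[of _ N M _ M _ N] assoc_mult_mat[of _ N N _ M _ M]
      assoc_mult_mat[of _ N M _ M _ M] assoc_mult_mat[of _ M M _ M _ N] assoc_mult_mat[of _ N N _ N _ N]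
      assoc_mult_mat[of _ M M _ N _ N] assoc_mult_mat[of _ N M _ N _ N] assoc_mult_mat[of _ N N _ M _ N])
  also have "\<dots> = V * (mat_adjoint Y * Y) * mat_adjoint V" using UU Y' by simp
  finally show ?thesis unfolding a .
qed

lemma unitary_cancel:
  fixes U V Y :: "complex mat"
  assumes U: "U \<in> carrier_mat M M" and V: "V \<in> carrier_mat N N" and Y: "Y \<in> carrier_mat M N"
    and UU: "mat_adjoint U * U = 1\<^sub>m M" and VV: "mat_adjoint V * V = 1\<^sub>m N"
  shows "mat_adjoint U * (U * Y * mat_adjoint V) * V = Y"
proof -
  have U': "mat_adjoint U \<in> carrier_mat M M" using U by simp
  have V': "mat_adjoint V \<in> carrier_mat N N" using V by simp
  have "mat_adjoint U * (U * Y * mat_adjoint V) * V = (mat_adjoint U * U) * Y * (mat_adjoint V * V)"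
    using U U' V V' Y
    by (simp add: assoc_mult_mat[of _ M M _ M _ N] assoc_mult_mat[of _ M M _ N _ N] assoc_mult_mat[of _ M N _ N _ N])
  thus ?thesis using UU VV Y by simp
qed

lemma unitary_prod:
  fixes V P B :: "complex mat"
  assumes V: "V \<in> carrier_mat N N" and P: "P \<in> carrier_mat N N" and B: "B \<in> carrier_mat N N"
    and VV: "V * mat_adjoint V = 1\<^sub>m N" "mat_adjoint V * V = 1\<^sub>m N"
    and PP: "P * mat_adjoint P = 1\<^sub>m N" "mat_adjoint P * P = 1\<^sub>m N"
  shows "V * (P * B * mat_adjoint P) * mat_adjoint V = (V * P) * B * mat_adjoint (V * P)"
    "(V * P) * mat_adjoint (V * P) = 1\<^sub>m N" "mat_adjoint (V * P) * (V * P) = 1\<^sub>m N"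
proof -
  have V': "mat_adjoint V \<in> carrier_mat N N" using V by simp
  have P': "mat_adjoint P \<in> carrier_mat N N" using P by simp
  have a: "mat_adjoint (V * P) = mat_adjoint P * mat_adjoint V" by (rule adj_mult[OF V P])
  note as = assoc_mult_mat[of _ N N _ N _ N]
  show "V * (P * B * mat_adjoint P) * mat_adjoint V = (V * P) * B * mat_adjoint (V * P)"
    unfolding a using V V' P P' B by (simp add: as)
  have "(V * P) * mat_adjoint (V * P) = V * (P * mat_adjoint P) * mat_adjoint V"
    unfolding a using V V' P P' by (simp add: as)
  thus "(V * P) * mat_adjoint (V * P) = 1\<^sub>m N" using PP VV V by simp
  have "mat_adjoint (V * P) * (V * P) = mat_adjoint P * (mat_adjoint V * V) * P"
    unfolding a using V V' P P' by (simp add: as)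
  thus "mat_adjoint (V * P) * (V * P) = 1\<^sub>m N" using PP VV P P' by simp
qed



lemma main_le:
  fixes M N :: nat and s0 \<alpha> :: real and F U V X :: "complex mat" and \<phi> :: "nat \<Rightarrow> real"
  assumes s0: "s0 > 0" and a: "\<alpha> \<ge> 0" and svd: "is_svd M N F U \<phi> V" and NM: "N \<le> M"
    and X: "X \<in> carrier_mat M N"
  shows "N_F_star s0 F (S_fun M N (\<lambda>x. complex_of_real (f_alpha s0 \<alpha> x)) U \<phi> V)
             + \<alpha>/2 * frob_sq (S_fun M N (\<lambda>x. complex_of_real (f_alpha s0 \<alpha> x)) U \<phi> V)
           \<le> N_F_star s0 F X + \<alpha>/2 * frob_sq X"
proof -
  from svd have F: "F \<in> carrier_mat M N" and U: "U \<in> carrier_mat M M" and UU': "mat_adjoint U * U = 1\<^sub>m M"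
    and V: "V \<in> carrier_mat N N" and VV': "mat_adjoint V * V = 1\<^sub>m N"
    and phi: "\<And>j. j < N \<Longrightarrow> \<phi> j \<ge> 0"
    and Fd: "F = U * diag_rect M N (\<lambda>j. complex_of_real (\<phi> j)) * mat_adjoint V"
    unfolding is_svd_def unitary_mat_def using NM by auto
  have U': "mat_adjoint U \<in> carrier_mat M M" using U by simp
  have V': "mat_adjoint V \<in> carrier_mat N N" using V by simp
  have UU: "U * mat_adjoint U = 1\<^sub>m M" using mat_mult_left_right_inverse[OF U' U UU'] .
  have VV: "V * mat_adjoint V = 1\<^sub>m N" using mat_mult_left_right_inverse[OF V' V VV'] .
  define fv where "fv j = f_alpha s0 \<alpha> (\<phi> j)" for j
  have fv0: "fv j \<ge> 0" for j unfolding fv_def by (rule f_alpha_nonneg[OF s0 a])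
  define Ds where "Ds = diag_rect M N (\<lambda>j. complex_of_real (fv j))"
  have Ds: "Ds \<in> carrier_mat M N" unfolding Ds_def diag_rect_def by auto
  define Xs where "Xs = U * Ds * mat_adjoint V"
  have Xs_def': "S_fun M N (\<lambda>x. complex_of_real (f_alpha s0 \<alpha> x)) U \<phi> V = Xs"
    unfolding S_fun_def Xs_def Ds_def fv_def ..
  have Xs: "Xs \<in> carrier_mat M N" unfolding Xs_def using U Ds V' by auto
  define Bs where "Bs = mat_adjoint Ds * Ds"
  have Bs: "Bs \<in> carrier_mat N N" unfolding Bs_def using Ds by auto
  have Bs_ent: "Bs $$ (k,l) = (if k = l then complex_of_real ((fv k)^2) else 0)" if "k < N" "l < N" for k l
  proof -
    have "Bs $$ (k,l) = (\<Sum>i<M. cnj (Ds $$ (i,k)) * Ds $$ (i,l))"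
      unfolding Bs_def using Ds that by (simp add: mult_index)
    also have "\<dots> = (\<Sum>i<M. if i = k then (if k = l then complex_of_real ((fv k)^2) else 0) else 0)"
      by (rule sum.cong[OF refl], insert that NM, auto simp: Ds_def diag_rect_def power2_eq_square)
    also have "\<dots> = (if k = l then complex_of_real ((fv k)^2) else 0)" using that NM by simp
    finally show ?thesis .
  qed
  have Bsd: "diagonal_mat Bs" unfolding diagonal_mat_def using Bs Bs_ent by auto
  have XsXs: "mat_adjoint Xs * Xs = V * Bs * mat_adjoint V"
    unfolding Xs_def Bs_def by (rule gram_unitary[OF U V Ds UU'])
  have objXs: "N_F_star s0 F Xs + \<alpha>/2 * frob_sq Xs
      = (\<Sum>k<N. Gf s0 \<alpha> (fv k)) - 2 * (\<Sum>j<N. \<phi> j * fv j) + frob_sq F"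
  proof -
    have "N_F_star s0 F Xs + \<alpha>/2 * frob_sq Xs
       = (\<Sum>k<N. Gf s0 \<alpha> (sqrt (Re (Bs $$ (k,k))))) - 2 * Re (ip Xs F) + frob_sq F"
      by (rule obj_formula[OF Xs NM F V VV VV' Bs Bsd XsXs])
    also have "(\<Sum>k<N. Gf s0 \<alpha> (sqrt (Re (Bs $$ (k,k))))) = (\<Sum>k<N. Gf s0 \<alpha> (fv k))"
      by (rule sum.cong[OF refl], simp add: Bs_ent fv0)
    also have "ip Xs F = (\<Sum>j<N. complex_of_real (\<phi> j) * (mat_adjoint U * Xs * V) $$ (j,j))"
      unfolding Fd by (rule ip_svd[OF Xs NM U V])
    also have "mat_adjoint U * Xs * V = Ds" unfolding Xs_def by (rule unitary_cancel[OF U V Ds UU' VV'])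
    also have "Re (\<Sum>j<N. complex_of_real (\<phi> j) * Ds $$ (j,j)) = (\<Sum>j<N. \<phi> j * fv j)"
      unfolding Re_sum by (rule sum.cong[OF refl], insert NM, auto simp: Ds_def diag_rect_def)
    finally show ?thesis .
  qed
  define Y where "Y = mat_adjoint U * X * V"
  have Y: "Y \<in> carrier_mat M N" unfolding Y_def using U' X V by auto
  have Y': "mat_adjoint Y \<in> carrier_mat N M" using Y by simp
  have YYc: "mat_adjoint Y * Y \<in> carrier_mat N N" using Y by auto
  have herm: "mat_adjoint (mat_adjoint Y * Y) = mat_adjoint Y * Y"
    by (subst adj_mult[OF Y' Y], simp)
  from herm_diag[OF YYc herm] obtain P B where P: "P \<in> carrier_mat N N"
    and PP': "mat_adjoint P * P = 1\<^sub>m N" and PP: "P * mat_adjoint P = 1\<^sub>m N"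
    and B: "B \<in> carrier_mat N N" and YY: "mat_adjoint Y * Y = P * B * mat_adjoint P" and Bd: "diagonal_mat B"
    by blast
  have XY: "X = U * Y * mat_adjoint V"
  proof -
    have "U * Y * mat_adjoint V = (U * mat_adjoint U) * X * (V * mat_adjoint V)"
      unfolding Y_def using U U' X V V'
      by (simp add: assoc_mult_mat[of _ M M _ M _ N] assoc_mult_mat[of _ M M _ N _ N] assoc_mult_mat[of _ M N _ N _ N])
    thus ?thesis using UU VV X by simp
  qed
  have XX: "mat_adjoint X * X = (V * P) * B * mat_adjoint (V * P)"
  proof -
    have "mat_adjoint X * X = V * (mat_adjoint Y * Y) * mat_adjoint V"
      unfolding XY by (rule gram_unitary[OF U V Y UU'])
    also have "\<dots> = (V * P) * B * mat_adjoint (V * P)" unfolding YY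
      by (rule unitary_prod(1)[OF V P B VV VV' PP PP'])
    finally show ?thesis .
  qed
  have VP: "V * P \<in> carrier_mat N N" using V P by auto
  have objX: "N_F_star s0 F X + \<alpha>/2 * frob_sq X
      = (\<Sum>k<N. Gf s0 \<alpha> (sqrt (Re (B $$ (k,k))))) - 2 * Re (ip X F) + frob_sq F"
    by (rule obj_formula[OF X NM F VP unitary_prod(2,3)[OF V P B VV VV' PP PP'] B Bd XX])
  have ipX: "ip X F = (\<Sum>j<N. complex_of_real (\<phi> j) * Y $$ (j,j))"
    unfolding Fd Y_def by (rule ip_svd[OF X NM U V])
  have core': "(\<Sum>j<N. Gf s0 \<alpha> (cmod (Y $$ (j,j)))) \<le> (\<Sum>k<N. Gf s0 \<alpha> (sqrt (Re (B $$ (k,k)))))"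
    by (rule core[OF Y NM P PP PP' B Bd YY s0 a])
  have reip: "Re (ip X F) \<le> (\<Sum>j<N. \<phi> j * cmod (Y $$ (j,j)))"
    unfolding ipX Re_sum
    by (rule sum_mono, insert phi, auto intro!: mult_left_mono complex_Re_le_cmod)
  have fy: "(\<Sum>j<N. Gf s0 \<alpha> (fv j) - 2 * (\<phi> j * fv j)) \<le> (\<Sum>j<N. Gf s0 \<alpha> (cmod (Y $$ (j,j))) - 2 * (\<phi> j * cmod (Y $$ (j,j))))"
  proof (rule sum_mono)
    fix j assume "j \<in> {..<N}"
    hence "j < N" by auto
    from Gf_fy[OF s0 a norm_ge_zero phi[OF this], of "Y $$ (j,j)"]
    show "Gf s0 \<alpha> (fv j) - 2 * (\<phi> j * fv j) \<le> Gf s0 \<alpha> (cmod (Y $$ (j,j))) - 2 * (\<phi> j * cmod (Y $$ (j,j)))"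
      by (simp add: fv_def mult.assoc)
  qed
  have "N_F_star s0 F Xs + \<alpha>/2 * frob_sq Xs 
      = (\<Sum>j<N. Gf s0 \<alpha> (fv j) - 2 * (\<phi> j * fv j)) + frob_sq F"
    unfolding objXs by (simp add: sum_subtractf sum_distrib_left)
  also have "\<dots> \<le> (\<Sum>j<N. Gf s0 \<alpha> (cmod (Y $$ (j,j))) - 2 * (\<phi> j * cmod (Y $$ (j,j)))) + frob_sq F"
    using fy by simp
  also have "\<dots> = (\<Sum>j<N. Gf s0 \<alpha> (cmod (Y $$ (j,j)))) - 2 * (\<Sum>j<N. \<phi> j * cmod (Y $$ (j,j))) + frob_sq F"
    by (simp add: sum_subtractf sum_distrib_left)
  also have "\<dots> \<le> N_F_star s0 F X + \<alpha>/2 * frob_sq X"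
    unfolding objX using core' reip by linarith
  finally show ?thesis unfolding Xs_def' .
qed



lemma frob_adj: "frob_sq (mat_adjoint A) = frob_sq A"
  unfolding frob_sq_def by (simp, subst sum.swap, simp)

lemma sv_adj: assumes "A \<in> carrier_mat M N" "M < N"
  shows "singular_values (mat_adjoint A) = singular_values A"
  using assms unfolding singular_values_def by auto

lemma adj_diag_real: "mat_adjoint (diag_rect M N (\<lambda>j. complex_of_real (g j))) = diag_rect N M (\<lambda>j. complex_of_real (g j))"
  unfolding diag_rect_def by (rule eq_matI, auto)

lemma adj_svd_form: fixes U D V :: "complex mat"
  assumes "U \<in> carrier_mat M M" "D \<in> carrier_mat M N" "V \<in> carrier_mat N N"
  shows "mat_adjoint (U * D * mat_adjoint V) = V * mat_adjoint D * mat_adjoint U"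
proof -
  have "mat_adjoint (U * D * mat_adjoint V) = V * (mat_adjoint D * mat_adjoint U)"
    using assms by (simp add: adj_mult[of _ M N _ N] adj_mult[of _ M M _ N])
  thus ?thesis using assms by (simp add: assoc_mult_mat[of _ N N _ N _ M])
qed

theorem proposition3:
  fixes M N :: nat and s0 \<alpha> :: real and F U V :: "complex mat" and \<phi> :: "nat \<Rightarrow> real"
  assumes "s0 > 0" and "\<alpha> \<ge> 0"
    and "is_svd M N F U \<phi> V"
  shows "\<forall>X \<in> carrier_mat M N.
           N_F_star s0 F (S_fun M N (\<lambda>x. complex_of_real (f_alpha s0 \<alpha> x)) U \<phi> V)
             + \<alpha>/2 * frob_sq (S_fun M N (\<lambda>x. complex_of_real (f_alpha s0 \<alpha> x)) U \<phi> V)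
           \<le> N_F_star s0 F X + \<alpha>/2 * frob_sq X"
proof
  fix X :: "complex mat" assume X: "X \<in> carrier_mat M N"
  note s0 = assms(1) and a = assms(2) and svd = assms(3)
  show "N_F_star s0 F (S_fun M N (\<lambda>x. complex_of_real (f_alpha s0 \<alpha> x)) U \<phi> V)
             + \<alpha>/2 * frob_sq (S_fun M N (\<lambda>x. complex_of_real (f_alpha s0 \<alpha> x)) U \<phi> V)
           \<le> N_F_star s0 F X + \<alpha>/2 * frob_sq X"
  proof (cases "N \<le> M")
    case True
    show ?thesis by (rule main_le[OF s0 a svd True X])
  next
    case False
    hence MN: "M < N" "M \<le> N" by auto
    let ?fa = "\<lambda>x. complex_of_real (f_alpha s0 \<alpha> x)"
    from svd have F: "F \<in> carrier_mat M N" and U: "U \<in> carrier_mat M M" and UU': "mat_adjoint U * U = 1\<^sub>m M"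
      and V: "V \<in> carrier_mat N N" and VV': "mat_adjoint V * V = 1\<^sub>m N"
      and phi: "\<forall>j<min M N. \<phi> j \<ge> 0"
      and Fd: "F = U * diag_rect M N (\<lambda>j. complex_of_real (\<phi> j)) * mat_adjoint V"
      unfolding is_svd_def unitary_mat_def by auto
    have D: "diag_rect M N g \<in> carrier_mat M N" for g unfolding diag_rect_def by auto
    have svd': "is_svd N M (mat_adjoint F) V \<phi> U"
      unfolding is_svd_def unitary_mat_def
    proof (intro conjI)
      show "mat_adjoint F \<in> carrier_mat N M" using F by simp
      show "mat_adjoint F = V * diag_rect N M (\<lambda>j. complex_of_real (\<phi> j)) * mat_adjoint U"
        unfolding Fd adj_svd_form[OF U D V] adj_diag_real ..
    qed (insert U UU' V VV' phi, auto simp: min.commute)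
    have X': "mat_adjoint X \<in> carrier_mat N M" using X by simp
    from main_le[OF s0 a svd' MN(2) X']
    have le: "N_F_star s0 (mat_adjoint F) (S_fun N M ?fa V \<phi> U) + \<alpha> / 2 * frob_sq (S_fun N M ?fa V \<phi> U)
      \<le> N_F_star s0 (mat_adjoint F) (mat_adjoint X) + \<alpha> / 2 * frob_sq (mat_adjoint X)" .
    have Sadj: "S_fun N M ?fa V \<phi> U = mat_adjoint (S_fun M N ?fa U \<phi> V)"
      unfolding S_fun_def adj_svd_form[OF U D V] adj_diag_real ..
    have Sc: "S_fun M N ?fa U \<phi> V \<in> carrier_mat M N" unfolding S_fun_def using U V D[of "\<lambda>j. ?fa (\<phi> j)"] by auto
    have NF: "N_F_star s0 (mat_adjoint F) (mat_adjoint Z) = N_F_star s0 F Z" if Z: "Z \<in> carrier_mat M N" for Z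
      unfolding N_F_star_def sv_adj[OF Z MN(1)] adj_minus[OF Z F, symmetric] frob_adj ..
    show ?thesis using le unfolding Sadj NF[OF Sc] NF[OF X] frob_adj .
  qed
qed


end
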